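(* Let $u$ be a symmetric solution of $i u_t + u_{xx} + |u|^4u=0$ with $\|u_0\|_{L^2}=\|Q\|_{L^2}$, on its maximal interval of existence $I$. Then the function $$d(t) = \inf_{\lambda>0,\gamma\in\mathbb{R}} \|e^{i\gamma}\lambda^{1/2}u(t,\lambda x) - Q(x)\|_{L^2(\mathbb{R})}$$ is upper semicontinuous on $I$. Moreover, there exists $\delta>0$ such that $d$ is continuous at every $t\in I$ with $d(t)<\delta$.
   Context: $Q(x) = (3/\cosh^2(2x))^{1/4}$. Solutions are strong $L^2$ solutions (in $C_tL^2_x\cap L^4_{t,loc}L^\infty_x$). *)

theory Defs
  imports "HOL-Analysis.Analysis" "HOL-Probability.Essential_Supremum"
begin

definition Q :: "real \<Rightarrow> real" where
  "Q x = (3 / (cosh (2 * x))^2) powr (1/4)"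

text \<open>Iterated partial derivatives of a function of (t,x): True = d/dt, False = d/dx
  (the list is applied right-to-left).\<close>
fun pd :: "bool list \<Rightarrow> (real \<Rightarrow> real \<Rightarrow> complex) \<Rightarrow> real \<Rightarrow> real \<Rightarrow> complex" where
  "pd [] f = f"
| "pd (True # bs) f = (\<lambda>t x. vector_derivative (\<lambda>s. pd bs f s x) (at t))"
| "pd (False # bs) f = (\<lambda>t x. vector_derivative (\<lambda>y. pd bs f t y) (at x))"

definition smooth2 :: "(real \<Rightarrow> real \<Rightarrow> complex) \<Rightarrow> bool" where
  "smooth2 f \<longleftrightarrow> (\<forall>bs. continuous_on UNIV (\<lambda>p. pd bs f (fst p) (snd p)) \<and>
      (\<forall>t x. (\<lambda>s. pd bs f s x) differentiable (at t) \<and> (\<lambda>y. pd bs f t y) differentiable (at x)))"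

definition test_fun :: "real set \<Rightarrow> (real \<Rightarrow> real \<Rightarrow> complex) \<Rightarrow> bool" where
  "test_fun I \<phi> \<longleftrightarrow> smooth2 \<phi> \<and>
     (\<exists>K. compact K \<and> K \<subseteq> I \<times> UNIV \<and> (\<forall>p. p \<notin> K \<longrightarrow> \<phi> (fst p) (snd p) = 0))"

text \<open>u in C_t L^2_x (I x R) \<inter> L^4_{t,loc} L^infinity_x, solving
  i u_t + u_xx + |u|^4 u = 0 in the sense of distributions on I x R.\<close>
definition nls_solution :: "(real \<Rightarrow> real \<Rightarrow> complex) \<Rightarrow> real set \<Rightarrow> bool" where
  "nls_solution u I \<longleftrightarrow>
     (\<lambda>p. u (fst p) (snd p)) \<in> borel_measurable (restrict_space (lborel \<Otimes>\<^sub>M lborel) (I \<times> UNIV)) \<and>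
     (\<forall>t\<in>I. (\<lambda>x. u t x) \<in> borel_measurable lborel \<and> integrable lborel (\<lambda>x. (cmod (u t x))\<^sup>2)) \<and>
     (\<forall>t0\<in>I. ((\<lambda>t. LINT x|lborel. (cmod (u t x - u t0 x))\<^sup>2) \<longlongrightarrow> 0) (at t0 within I)) \<and>
     (\<forall>a b. {a..b} \<subseteq> I \<longrightarrow>
        (\<integral>\<^sup>+ t \<in> {a..b}. (esssup lborel (\<lambda>x. ennreal (cmod (u t x)))) ^ 4 \<partial>lborel) < \<infinity>) \<and>
     (\<forall>\<phi>. test_fun I \<phi> \<longrightarrow>
        (let F = (\<lambda>p. u (fst p) (snd p) *
                     (- \<i> * pd [True] \<phi> (fst p) (snd p) + pd [False, False] \<phi> (fst p) (snd p))
                   + complex_of_real ((cmod (u (fst p) (snd p))) ^ 4) * u (fst p) (snd p) * \<phi> (fst p) (snd p))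
         in integrable (lborel \<Otimes>\<^sub>M lborel) F \<and> integral\<^sup>L (lborel \<Otimes>\<^sub>M lborel) F = 0))"

definition maximal_nls_solution :: "(real \<Rightarrow> real \<Rightarrow> complex) \<Rightarrow> real set \<Rightarrow> bool" where
  "maximal_nls_solution u I \<longleftrightarrow> is_interval I \<and> open I \<and> 0 \<in> I \<and> nls_solution u I \<and>
     \<not> (\<exists>J v. is_interval J \<and> open J \<and> I \<subset> J \<and> nls_solution v J \<and>
              (\<forall>t\<in>I. AE x in lborel. v t x = u t x))"

definition dist_Q :: "(real \<Rightarrow> real \<Rightarrow> complex) \<Rightarrow> real \<Rightarrow> real" where
  "dist_Q u t = Inf {sqrt (LINT x|lborel.
       (cmod (exp (\<i> * complex_of_real g) * complex_of_real (sqrt lam) * u t (lam * x)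
              - complex_of_real (Q x)))\<^sup>2) | lam g. lam > 0}"

end

theory Submission
  imports Defs
begin

lemma real_mink_aux:
  fixes X A B :: real
  assumes A: "A \<ge> 0" and B: "B \<ge> 0"
    and H: "\<And>t. t > 0 \<Longrightarrow> X \<le> (1 + t) * A + (1 + 1 / t) * B"
  shows "X \<le> (sqrt A + sqrt B)\<^sup>2"
proof (cases "A > 0 \<and> B > 0")
  case True
  define t where "t = sqrt B / sqrt A"
  have tp: "t > 0" using True by (simp add: t_def)
  have "(1 + t) * A + (1 + 1 / t) * B = (sqrt A + sqrt B)\<^sup>2"
    using True unfolding t_def
    by (simp add: field_simps power2_eq_square)
  then show ?thesis using H[OF tp] by simp
next
  case False
  then have "A = 0 \<or> B = 0" using A B by auto
  then show ?thesis
  proof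
    assume A0: "A = 0"
    show ?thesis
    proof (rule ccontr)
      assume "\<not> ?thesis"
      then have XB: "X > B" using A0 B by simp
      have "B > 0" proof (rule ccontr)
        assume "\<not> B > 0" then have "B = 0" using B by simp
        then show False using H[of 1] A0 XB by simp
      qed
      define t where "t = 2 * B / (X - B)"
      have tp: "t > 0" using XB \<open>B > 0\<close> by (simp add: t_def)
      have "X \<le> B + B / t" using H[OF tp] A0 by (simp add: algebra_simps)
      also have "B / t = (X - B) / 2" using XB \<open>B > 0\<close> by (simp add: t_def)
      finally have "X \<le> B + (X - B) / 2" . then show False using XB by (simp add: field_simps)
    qed
  next
    assume B0: "B = 0"
    show ?thesis
    proof (rule ccontr)
      assume "\<not> ?thesis"
      then have XA: "X > A" using B0 A by simp
      have "A > 0" proof (rule ccontr)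
        assume "\<not> A > 0" then have "A = 0" using A by simp
        then show False using H[of 1] B0 XA by simp
      qed
      define t where "t = (X - A) / (2 * A)"
      have tp: "t > 0" using XA \<open>A > 0\<close> by (simp add: t_def)
      have "X \<le> A + t * A" using H[OF tp] B0 by (simp add: algebra_simps)
      also have "t * A = (X - A) / 2" using XA \<open>A > 0\<close> by (simp add: t_def)
      finally have "X \<le> A + (X - A) / 2" . then show False using XA by (simp add: field_simps)
    qed
  qed
qed

lemma pw_ineq:
  fixes a b :: complex and t :: real
  assumes "t > 0"
  shows "(cmod (a + b))\<^sup>2 \<le> (1 + t) * (cmod a)\<^sup>2 + (1 + 1 / t) * (cmod b)\<^sup>2"
proof -
  have "cmod (a + b) \<le> cmod a + cmod b" by (rule norm_triangle_ineq)
  then have "(cmod (a + b))\<^sup>2 \<le> (cmod a + cmod b)\<^sup>2"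
    by (simp add: power_mono)
  also have "2 * cmod a * cmod b \<le> t * (cmod a)\<^sup>2 + (cmod b)\<^sup>2 / t"
  proof -
    have "0 \<le> (t * cmod a - cmod b)\<^sup>2 / t" using assms by simp
    also have "(t * cmod a - cmod b)\<^sup>2 / t = t * (cmod a)\<^sup>2 + (cmod b)\<^sup>2 / t - 2 * cmod a * cmod b"
      using assms by (simp add: field_simps power2_eq_square)
    finally show ?thesis by simp
  qed
  then have "(cmod a + cmod b)\<^sup>2 \<le> (1 + t) * (cmod a)\<^sup>2 + (1 + 1 / t) * (cmod b)\<^sup>2"
    by (simp add: power2_sum algebra_simps)
  finally show ?thesis .
qed

lemma L2_tri:
  fixes f h :: "real \<Rightarrow> complex"
  assumes fm[measurable]: "f \<in> borel_measurable lborel" and hm[measurable]: "h \<in> borel_measurable lborel"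
    and hi: "integrable lborel (\<lambda>x. (cmod (h x))\<^sup>2)"
  shows "sqrt (LINT x|lborel. (cmod (f x + h x))\<^sup>2)
     \<le> sqrt (LINT x|lborel. (cmod (f x))\<^sup>2) + sqrt (LINT x|lborel. (cmod (h x))\<^sup>2)"
proof (cases "integrable lborel (\<lambda>x. (cmod (f x))\<^sup>2)")
  case True
  define A where "A = (LINT x|lborel. (cmod (f x))\<^sup>2)"
  define B where "B = (LINT x|lborel. (cmod (h x))\<^sup>2)"
  define X where "X = (LINT x|lborel. (cmod (f x + h x))\<^sup>2)"
  have A0: "A \<ge> 0" unfolding A_def by simp
  have B0: "B \<ge> 0" unfolding B_def by simp
  have "X \<le> (sqrt A + sqrt B)\<^sup>2"
  proof (rule real_mink_aux[OF A0 B0])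
    fix t :: real assume tp: "t > 0"
    have gi: "integrable lborel (\<lambda>x. (1 + t) * (cmod (f x))\<^sup>2 + (1 + 1 / t) * (cmod (h x))\<^sup>2)"
      using True hi by simp
    have fi: "integrable lborel (\<lambda>x. (cmod (f x + h x))\<^sup>2)"
      by (rule Bochner_Integration.integrable_bound[OF gi]) (auto intro!: AE_I2 order_trans[OF pw_ineq[OF tp] abs_ge_self])
    have "X \<le> (LINT x|lborel. (1 + t) * (cmod (f x))\<^sup>2 + (1 + 1 / t) * (cmod (h x))\<^sup>2)"
      unfolding X_def by (rule integral_mono[OF fi gi]) (rule pw_ineq[OF tp])
    also have "\<dots> = (1 + t) * A + (1 + 1 / t) * B"
      using True hi unfolding A_def B_def by simp
    finally show "X \<le> (1 + t) * A + (1 + 1 / t) * B" .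
  qed
  then have "sqrt X \<le> sqrt A + sqrt B"
    by (metis A0 B0 real_le_lsqrt real_sqrt_ge_zero add_nonneg_nonneg)
  then show ?thesis unfolding X_def A_def B_def .
next
  case False
  have "\<not> integrable lborel (\<lambda>x. (cmod (f x + h x))\<^sup>2)"
  proof
    assume fi: "integrable lborel (\<lambda>x. (cmod (f x + h x))\<^sup>2)"
    have "integrable lborel (\<lambda>x. 2 * (cmod (f x + h x))\<^sup>2 + 2 * (cmod (h x))\<^sup>2)"
      using fi hi by simp
    then have "integrable lborel (\<lambda>x. (cmod (f x))\<^sup>2)"
    proof (rule Bochner_Integration.integrable_bound)
      show "AE x in lborel. norm ((cmod (f x))\<^sup>2) \<le> norm (2 * (cmod (f x + h x))\<^sup>2 + 2 * (cmod (h x))\<^sup>2)"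
      proof (rule AE_I2)
        fix x
        have "f x = (f x + h x) + (- h x)" by simp
        then have "(cmod (f x))\<^sup>2 \<le> (1 + 1) * (cmod (f x + h x))\<^sup>2 + (1 + 1 / 1) * (cmod (- h x))\<^sup>2"
          by (metis pw_ineq zero_less_one)
        then show "norm ((cmod (f x))\<^sup>2) \<le> norm (2 * (cmod (f x + h x))\<^sup>2 + 2 * (cmod (h x))\<^sup>2)"
          by simp
      qed
    qed simp
    with False show False by simp
  qed
  then have "(LINT x|lborel. (cmod (f x + h x))\<^sup>2) = 0" by (rule not_integrable_integral_eq)
  then show ?thesis by simp
qed


lemma Q_meas[measurable]: "Q \<in> borel_measurable borel"
proof (rule borel_measurable_continuous_onI)
  have c: "\<And>x. cosh (2 * x) \<noteq> (0::real)" by (simp add: cosh_def) (smt (verit) exp_gt_zero)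
  show "continuous_on UNIV Q" unfolding Q_def
    using c by (intro continuous_intros) auto
qed

definition Vd :: "(real \<Rightarrow> real \<Rightarrow> complex) \<Rightarrow> real \<Rightarrow> real \<Rightarrow> real \<Rightarrow> real" where
  "Vd u t lam g = sqrt (LINT x|lborel.
       (cmod (exp (\<i> * complex_of_real g) * complex_of_real (sqrt lam) * u t (lam * x)
              - complex_of_real (Q x)))\<^sup>2)"

lemma key_step:
  fixes u :: "real \<Rightarrow> real \<Rightarrow> complex"
  assumes ms[measurable]: "(\<lambda>x. u s x) \<in> borel_measurable lborel"
    and mt[measurable]: "(\<lambda>x. u t x) \<in> borel_measurable lborel"
    and iS: "integrable lborel (\<lambda>x. (cmod (u s x))\<^sup>2)"
    and it: "integrable lborel (\<lambda>x. (cmod (u t x))\<^sup>2)"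
    and lam: "lam > 0"
  shows "Vd u s lam g \<le> Vd u t lam g + sqrt (LINT x|lborel. (cmod (u s x - u t x))\<^sup>2)"
proof -
  define c where "c = exp (\<i> * complex_of_real g) * complex_of_real (sqrt lam)"
  have cn: "cmod c = sqrt lam" unfolding c_def using lam by (simp add: norm_mult)
  define f where "f = (\<lambda>x. c * u t (lam * x) - complex_of_real (Q x))"
  define h where "h = (\<lambda>x. c * (u s (lam * x) - u t (lam * x)))"
  have ms'[measurable]: "(\<lambda>x. u s (lam * x)) \<in> borel_measurable lborel"
    using measurable_compose[OF _ ms, of "\<lambda>x. lam * x" lborel] by simp
  have mt'[measurable]: "(\<lambda>x. u t (lam * x)) \<in> borel_measurable lborel"
    using measurable_compose[OF _ mt, of "\<lambda>x. lam * x" lborel] by simp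
  have fm: "f \<in> borel_measurable lborel" unfolding f_def by measurable
  have hm: "h \<in> borel_measurable lborel" unfolding h_def by measurable
  have di: "integrable lborel (\<lambda>x. (cmod (u s x - u t x))\<^sup>2)"
  proof (rule Bochner_Integration.integrable_bound)
    show "integrable lborel (\<lambda>x. 2 * (cmod (u s x))\<^sup>2 + 2 * (cmod (u t x))\<^sup>2)"
      using iS it by simp
    show "AE x in lborel. norm ((cmod (u s x - u t x))\<^sup>2) \<le> norm (2 * (cmod (u s x))\<^sup>2 + 2 * (cmod (u t x))\<^sup>2)"
    proof (rule AE_I2)
      fix x
      have "(cmod (u s x + - u t x))\<^sup>2 \<le> (1 + 1) * (cmod (u s x))\<^sup>2 + (1 + 1 / 1) * (cmod (- u t x))\<^sup>2"
        by (rule pw_ineq) simp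
      then show "norm ((cmod (u s x - u t x))\<^sup>2) \<le> norm (2 * (cmod (u s x))\<^sup>2 + 2 * (cmod (u t x))\<^sup>2)"
        by simp
    qed
  qed simp
  have hsq: "(\<lambda>x. (cmod (h x))\<^sup>2) = (\<lambda>x. lam * (cmod (u s (0 + lam * x) - u t (0 + lam * x)))\<^sup>2)"
    unfolding h_def using lam by (simp add: norm_mult cn power_mult_distrib)
  have hi: "integrable lborel (\<lambda>x. (cmod (h x))\<^sup>2)"
    unfolding hsq using lborel_integrable_real_affine[OF di, of lam 0] lam by simp
  have hint: "(LINT x|lborel. (cmod (h x))\<^sup>2) = (LINT x|lborel. (cmod (u s x - u t x))\<^sup>2)"
    unfolding hsq using lborel_integral_real_affine[of lam "\<lambda>x. (cmod (u s x - u t x))\<^sup>2" 0] lam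
    by simp
  have fh: "\<And>x. f x + h x = c * u s (lam * x) - complex_of_real (Q x)"
    unfolding f_def h_def by (simp add: algebra_simps)
  from L2_tri[OF fm hm hi] show ?thesis
    unfolding Vd_def fh hint by (simp add: f_def c_def)
qed


lemma dist_Q_Vd: "dist_Q u t = Inf {Vd u t lam g | lam g. lam > 0}"
  unfolding dist_Q_def Vd_def by simp

lemma dist_step:
  fixes u :: "real \<Rightarrow> real \<Rightarrow> complex"
  assumes ms: "(\<lambda>x. u s x) \<in> borel_measurable lborel"
    and mt: "(\<lambda>x. u t x) \<in> borel_measurable lborel"
    and iS: "integrable lborel (\<lambda>x. (cmod (u s x))\<^sup>2)"
    and it: "integrable lborel (\<lambda>x. (cmod (u t x))\<^sup>2)"
  shows "dist_Q u s \<le> dist_Q u t + sqrt (LINT x|lborel. (cmod (u s x - u t x))\<^sup>2)"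
proof -
  define N where "N = sqrt (LINT x|lborel. (cmod (u s x - u t x))\<^sup>2)"
  have ne: "{Vd u t lam g | lam g. lam > 0} \<noteq> {}" proof -
    have "Vd u t 1 0 \<in> {Vd u t lam g | lam g. lam > 0}" by auto
    then show ?thesis by blast
  qed
  have bs: "bdd_below {Vd u s lam g | lam g. lam > 0}"
    by (rule bdd_belowI[of _ 0]) (auto simp: Vd_def)
  have "dist_Q u s - N \<le> Inf {Vd u t lam g | lam g. lam > 0}"
  proof (rule cInf_greatest[OF ne])
    fix y assume "y \<in> {Vd u t lam g | lam g. lam > 0}"
    then obtain lam g where y: "y = Vd u t lam g" and lam: "lam > 0" by auto
    have "dist_Q u s \<le> Vd u s lam g"
      unfolding dist_Q_Vd by (rule cInf_lower[OF _ bs]) (use lam in auto)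
    also have "\<dots> \<le> Vd u t lam g + N"
      unfolding N_def by (rule key_step[OF ms mt iS it lam])
    finally show "dist_Q u s - N \<le> y" using y by simp
  qed
  then show ?thesis unfolding N_def dist_Q_Vd by simp
qed

theorem theorem2p4:
  fixes u :: "real \<Rightarrow> real \<Rightarrow> complex" and I :: "real set"
  assumes max: "maximal_nls_solution u I"
    and symm: "\<forall>t\<in>I. AE x in lborel. u t (- x) = u t x"
    and mass: "(LINT x|lborel. (cmod (u 0 x))\<^sup>2) = (LINT x|lborel. (Q x)\<^sup>2)"
  shows "(\<forall>t\<in>I. \<forall>e>0. \<forall>\<^sub>F s in at t within I. dist_Q u s < dist_Q u t + e) \<and>
         (\<exists>\<delta>>0. \<forall>t\<in>I. dist_Q u t < \<delta> \<longrightarrow> continuous (at t within I) (dist_Q u))"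
proof -
  have sol: "nls_solution u I" using max unfolding maximal_nls_solution_def by simp
  have M: "\<And>t. t \<in> I \<Longrightarrow> (\<lambda>x. u t x) \<in> borel_measurable lborel \<and> integrable lborel (\<lambda>x. (cmod (u t x))\<^sup>2)"
    using sol unfolding nls_solution_def by blast
  have C: "\<And>t0. t0 \<in> I \<Longrightarrow> ((\<lambda>t. LINT x|lborel. (cmod (u t x - u t0 x))\<^sup>2) \<longlongrightarrow> 0) (at t0 within I)"
    using sol unfolding nls_solution_def by blast
  have cont: "continuous (at t within I) (dist_Q u)" if tI: "t \<in> I" for t
  proof -
    have lim: "((\<lambda>s. sqrt (LINT x|lborel. (cmod (u s x - u t x))\<^sup>2)) \<longlongrightarrow> 0) (at t within I)"
      using tendsto_real_sqrt[OF C[OF tI]] by simp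
    have ev: "\<forall>\<^sub>F s in at t within I. norm (dist_Q u s - dist_Q u t) \<le> sqrt (LINT x|lborel. (cmod (u s x - u t x))\<^sup>2)"
      unfolding eventually_at_filter
    proof (intro always_eventually allI impI)
      fix s assume "s \<noteq> t" "s \<in> I"
      have 1: "dist_Q u s \<le> dist_Q u t + sqrt (LINT x|lborel. (cmod (u s x - u t x))\<^sup>2)"
        using dist_step M[OF \<open>s \<in> I\<close>] M[OF tI] by blast
      have 2: "dist_Q u t \<le> dist_Q u s + sqrt (LINT x|lborel. (cmod (u t x - u s x))\<^sup>2)"
        using dist_step M[OF \<open>s \<in> I\<close>] M[OF tI] by blast
      have "(\<lambda>x. (cmod (u t x - u s x))\<^sup>2) = (\<lambda>x. (cmod (u s x - u t x))\<^sup>2)"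
        by (simp add: norm_minus_commute)
      then show "norm (dist_Q u s - dist_Q u t) \<le> sqrt (LINT x|lborel. (cmod (u s x - u t x))\<^sup>2)"
        using 1 2 by auto
    qed
    have "((\<lambda>s. dist_Q u s - dist_Q u t) \<longlongrightarrow> 0) (at t within I)"
      by (rule Lim_null_comparison[OF ev lim])
    then have "(dist_Q u \<longlongrightarrow> dist_Q u t) (at t within I)"
      by (rule LIM_zero_cancel)
    then show ?thesis unfolding continuous_within .
  qed
  show ?thesis
  proof (intro conjI ballI allI impI)
    fix t e assume tI: "t \<in> I" and e: "(e::real) > 0"
    have "(dist_Q u \<longlongrightarrow> dist_Q u t) (at t within I)"
      using cont[OF tI] unfolding continuous_within .
    then show "\<forall>\<^sub>F s in at t within I. dist_Q u s < dist_Q u t + e"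
      by (rule order_tendstoD) (use e in simp)
  next
    show "\<exists>\<delta>>0. \<forall>t\<in>I. dist_Q u t < \<delta> \<longrightarrow> continuous (at t within I) (dist_Q u)"
      using cont by (intro exI[of _ 1]) auto
  qed
qed

end
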